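(* Let $\{\mathcal{G}_k\}_{k\ge0}$ be any sequence of digraphs on $\mathcal{V}=\{1,\dots,n\}$, $n\ge3$. Consider any algorithm in $\mathcal{A}_{\rm ave}$ whose parameters satisfy $\sum_{k=0}^\infty(1-\eta_k)<\infty$. Then for every initial time $k_0\ge0$ and every initial value $x^0\in\mathbb{R}^n$ not on the consensus manifold $\mathrm{C}=\{x: x_1=\dots=x_n\}$, asymptotic consensus is not achieved; in fact $\liminf_{K\to\infty}\big(\max_i x_i(K)-\min_i x_i(K)\big)>0$.
   Context: Network of nodes $\mathcal{V}=\{1,\dots,n\}$, discrete time, states $x_i(k)\in\mathbb{R}$. At each time $k$ a digraph $\mathcal{G}_k=(\mathcal{V},\mathcal{E}_k)$ is given; $j$ is a neighbor of $i$ at time $k$ if $(j,i)\in\mathcal{E}_k$, every node is always its own neighbor; $\mathcal{N}_i(k)$ is the neighbor set. The algorithm is $$x_i(k+1)=\eta_k x_i(k)+\alpha_k\min_{j\in\mathcal{N}_i(k)}x_j(k)+(1-\eta_k-\alpha_k)\max_{j\in\mathcal{N}_i(k)}x_j(k),$$ with given node-independent parameter sequences. The class $\mathcal{A}_{\rm ave}$ consists of those algorithms with $\eta_k\in(0,1]$, $\alpha_k\in[0,1-\eta_k]$ for all $k$. The iteration starts at time $k_0$ with $x(k_0)=x^0$. Asymptotic consensus for $x^0$ means there is $z_*\in\mathbb{R}$ with $\lim_{k\to\infty}x_i(k)=z_*$ for all $i$. *)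

theory Defs
  imports "HOL-Analysis.Analysis"
begin

definition nbrs :: "(nat \<Rightarrow> ('a \<times> 'a) set) \<Rightarrow> nat \<Rightarrow> 'a \<Rightarrow> 'a set" where
  "nbrs E k i = {j. (j, i) \<in> E k} \<union> {i}"

definition alg_step :: "(nat \<Rightarrow> ('a \<times> 'a) set) \<Rightarrow> (nat \<Rightarrow> real) \<Rightarrow> (nat \<Rightarrow> real)
    \<Rightarrow> nat \<Rightarrow> ('a \<Rightarrow> real) \<Rightarrow> ('a \<Rightarrow> real)" where
  "alg_step E \<eta> \<alpha> k x i =
     \<eta> k * x i + \<alpha> k * Min (x ` nbrs E k i) + (1 - \<eta> k - \<alpha> k) * Max (x ` nbrs E k i)"

text \<open>State after m steps when started at time k0 with value x0, i.e. x(k0 + m).\<close>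
primrec traj :: "(nat \<Rightarrow> ('a \<times> 'a) set) \<Rightarrow> (nat \<Rightarrow> real) \<Rightarrow> (nat \<Rightarrow> real)
    \<Rightarrow> nat \<Rightarrow> ('a \<Rightarrow> real) \<Rightarrow> nat \<Rightarrow> ('a \<Rightarrow> real)" where
  "traj E \<eta> \<alpha> k0 x0 0 = x0"
| "traj E \<eta> \<alpha> k0 x0 (Suc m) = alg_step E \<eta> \<alpha> (k0 + m) (traj E \<eta> \<alpha> k0 x0 m)"

text \<open>x(K) for K \<ge> k0 (the value for K < k0 is irrelevant, set to x0).\<close>
definition state :: "(nat \<Rightarrow> ('a \<times> 'a) set) \<Rightarrow> (nat \<Rightarrow> real) \<Rightarrow> (nat \<Rightarrow> real)
    \<Rightarrow> nat \<Rightarrow> ('a \<Rightarrow> real) \<Rightarrow> nat \<Rightarrow> ('a \<Rightarrow> real)" where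
  "state E \<eta> \<alpha> k0 x0 K = traj E \<eta> \<alpha> k0 x0 (K - k0)"

definition in_A_ave :: "(nat \<Rightarrow> real) \<Rightarrow> (nat \<Rightarrow> real) \<Rightarrow> bool" where
  "in_A_ave \<eta> \<alpha> \<longleftrightarrow> (\<forall>k. 0 < \<eta> k \<and> \<eta> k \<le> 1 \<and> 0 \<le> \<alpha> k \<and> \<alpha> k \<le> 1 - \<eta> k)"

definition asymptotic_consensus :: "(nat \<Rightarrow> ('a \<Rightarrow> real)) \<Rightarrow> bool" where
  "asymptotic_consensus x \<longleftrightarrow> (\<exists>z. \<forall>i. (\<lambda>k. x k i) \<longlonglongrightarrow> z)"

definition spread :: "('a::finite \<Rightarrow> real) \<Rightarrow> real" where
  "spread x = Max (range x) - Min (range x)"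

end

theory Submission
  imports Defs
begin

lemma nbrs_fin: "finite (nbrs E k (i::'n::finite))" by simp
lemma nbrs_in: "i \<in> nbrs E k i" by (simp add: nbrs_def)

lemma spread_ge: "x i - x j \<le> spread (x::'n::finite \<Rightarrow> real)"
proof -
  have "x i \<le> Max (range x)" by simp
  moreover have "Min (range x) \<le> x j" by simp
  ultimately show ?thesis unfolding spread_def by linarith
qed

lemma spread_nonneg: "0 \<le> spread (x::'n::finite \<Rightarrow> real)"
  using spread_ge[of x undefined undefined] by simp

lemma step_spread:
  fixes x :: "'n::finite \<Rightarrow> real"
  assumes A: "in_A_ave \<eta> \<alpha>"
  shows "\<eta> k * spread x \<le> spread (alg_step E \<eta> \<alpha> k x)"
proof -
  have "Max (range x) \<in> range x" by (rule Max_in) simp_all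
  then obtain t where t: "x t = Max (range x)" by (auto simp: image_iff)
  have "Min (range x) \<in> range x" by (rule Min_in) simp_all
  then obtain b where b: "x b = Min (range x)" by (auto simp: image_iff)
  have sp: "spread x = x t - x b" using t b by (simp add: spread_def)
  have m1: "Min (x ` nbrs E k t) \<ge> x b"
    using b nbrs_in[of t E k] by (subst Min_ge_iff) (auto simp: nbrs_fin)
  have m2: "Max (x ` nbrs E k b) \<le> x t"
    using t nbrs_in[of b E k] by (subst Max_le_iff) (auto simp: nbrs_fin)
  have p: "0 \<le> \<alpha> k" "0 \<le> 1 - \<eta> k - \<alpha> k" using A unfolding in_A_ave_def by auto
  have "alg_step E \<eta> \<alpha> k x t - alg_step E \<eta> \<alpha> k x b
      = \<eta> k * (x t - x b) + \<alpha> k * (Min (x ` nbrs E k t) - x b)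
        + (1 - \<eta> k - \<alpha> k) * (x t - Max (x ` nbrs E k b))"
  proof -
    have "Min (x ` nbrs E k b) = x b"
    proof (rule antisym)
      show "Min (x ` nbrs E k b) \<le> x b" using nbrs_in[of b E k] by (intro Min_le) (auto simp: nbrs_fin)
      have "\<forall>y\<in>x ` nbrs E k b. x b \<le> y" using b by auto
      thus "x b \<le> Min (x ` nbrs E k b)" using nbrs_in[of b E k] by (subst Min_ge_iff) (auto simp: nbrs_fin)
    qed
    moreover have "Max (x ` nbrs E k t) = x t"
    proof (rule antisym)
      show "x t \<le> Max (x ` nbrs E k t)" using nbrs_in[of t E k] by (intro Max_ge) (auto simp: nbrs_fin)
      have "\<forall>y\<in>x ` nbrs E k t. y \<le> x t" using t by auto
      thus "Max (x ` nbrs E k t) \<le> x t" using nbrs_in[of t E k] by (subst Max_le_iff) (auto simp: nbrs_fin)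
    qed
    ultimately show ?thesis unfolding alg_step_def by (simp add: algebra_simps)
  qed
  also have "\<dots> \<ge> \<eta> k * (x t - x b)"
    using p m1 m2 by (simp add: add_nonneg_nonneg mult_nonneg_nonneg)
  finally show ?thesis using sp spread_ge[of "alg_step E \<eta> \<alpha> k x" t b] by simp
qed

lemma traj_spread:
  fixes x0 :: "'n::finite \<Rightarrow> real"
  assumes A: "in_A_ave \<eta> \<alpha>"
  shows "spread x0 * (\<Prod>k<m. \<eta> (k0 + k)) \<le> spread (traj E \<eta> \<alpha> k0 x0 m)"
proof (induction m)
  case 0 then show ?case by simp
next
  case (Suc m)
  have e: "0 \<le> \<eta> (k0 + m)" using A unfolding in_A_ave_def by (meson less_imp_le)
  have "spread x0 * (\<Prod>k<Suc m. \<eta> (k0 + k)) = (spread x0 * (\<Prod>k<m. \<eta> (k0 + k))) * \<eta> (k0+m)"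
    by (simp add: algebra_simps)
  also have "\<dots> \<le> spread (traj E \<eta> \<alpha> k0 x0 m) * \<eta> (k0+m)"
    using Suc e by (simp add: mult_right_mono)
  also have "\<dots> \<le> spread (traj E \<eta> \<alpha> k0 x0 (Suc m))"
    using step_spread[OF A, of "k0+m" "traj E \<eta> \<alpha> k0 x0 m" E] by (simp add: algebra_simps)
  finally show ?case .
qed

lemma exp_bound: assumes "1/2 \<le> (e::real)" "e \<le> 1" shows "exp (-2*(1-e)) \<le> e"
proof -
  have "ln e \<ge> -2*(1-e)"
  proof -
    have "ln (1/e) \<le> 1/e - 1" using assms by (intro ln_le_minus_one) auto
    moreover have "1/e - 1 \<le> 2*(1-e)"
    proof -
      have e0: "0 < e" using assms by simp
      have h: "0 \<le> (2*e-1)*(1-e)" using assms by simp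
      have "1/e - 1 = (1-e)/e" using e0 by (simp add: field_simps)
      also have "\<dots> \<le> 2*(1-e)"
      proof -
        have hh: "1-e \<le> 2*(1-e)*e" using h by (simp add: algebra_simps)
        show ?thesis by (subst pos_divide_le_eq[OF e0]) (rule hh)
      qed
      finally show ?thesis .
    qed
    moreover have "ln (1/e) = - ln e" using assms by (simp add: ln_div)
    ultimately show ?thesis by linarith
  qed
  then have "exp (-2*(1-e)) \<le> exp (ln e)" by simp
  moreover have "exp (ln e) = e" using assms by simp
  ultimately show ?thesis by simp
qed

lemma prod_lower:
  assumes A: "in_A_ave \<eta> \<alpha>" and S: "summable (\<lambda>k. 1 - \<eta> k)"
  shows "\<exists>C>0. \<forall>F. finite F \<longrightarrow> C \<le> (\<Prod>j\<in>F. \<eta> j)"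
proof -
  have pos: "\<And>j. 0 < \<eta> j" and le1: "\<And>j. \<eta> j \<le> 1" using A unfolding in_A_ave_def by auto
  have "(\<lambda>k. 1 - \<eta> k) \<longlonglongrightarrow> 0" using S summable_LIMSEQ_zero by blast
  hence "eventually (\<lambda>k. 1 - \<eta> k < 1/2) sequentially"
    by (rule order_tendstoD(2)) simp
  then obtain N where N0: "\<And>j. j \<ge> N \<Longrightarrow> 1 - \<eta> j < 1/2"
    unfolding eventually_sequentially by blast
  hence N: "\<And>j. j \<ge> N \<Longrightarrow> 1 - \<eta> j \<le> 1/2" by (simp add: less_imp_le)
  define Ssum where "Ssum = suminf (\<lambda>k. 1 - \<eta> k)"
  define C where "C = (\<Prod>j<N. \<eta> j) * exp (-2 * Ssum)"
  have Cpos: "C > 0" unfolding C_def using pos by (simp add: prod_pos)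
  have "\<forall>F. finite F \<longrightarrow> C \<le> (\<Prod>j\<in>F. \<eta> j)"
  proof (intro allI impI)
    fix F :: "nat set" assume F: "finite F"
    let ?L = "F \<inter> {..<N}" and ?H = "F - {..<N}"
    have split: "(\<Prod>j\<in>F. \<eta> j) = (\<Prod>j\<in>?L. \<eta> j) * (\<Prod>j\<in>?H. \<eta> j)"
      using F by (rule prod.Int_Diff)
    have L1: "(\<Prod>j<N. \<eta> j) \<le> (\<Prod>j\<in>?L. \<eta> j)"
    proof -
      have "(\<Prod>j<N. \<eta> j) = (\<Prod>j\<in>?L. \<eta> j) * (\<Prod>j\<in>{..<N} - F. \<eta> j)"
        using prod.Int_Diff[of "{..<N}" \<eta> F] by (simp add: Int_commute)
      moreover have "(\<Prod>j\<in>{..<N} - F. \<eta> j) \<le> 1" using pos le1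
        by (simp add: prod_le_1 less_imp_le)
      moreover have "0 \<le> (\<Prod>j\<in>?L. \<eta> j)" using pos by (simp add: prod_nonneg less_imp_le)
      ultimately show ?thesis by (simp add: mult_left_le)
    qed
    have H1: "exp (-2 * Ssum) \<le> (\<Prod>j\<in>?H. \<eta> j)"
    proof -
      have "sum (\<lambda>k. 1 - \<eta> k) ?H \<le> Ssum" unfolding Ssum_def
        using S F le1 by (intro sum_le_suminf) auto
      hence "exp (-2 * Ssum) \<le> exp (-2 * sum (\<lambda>k. 1 - \<eta> k) ?H)" by simp
      also have "\<dots> = (\<Prod>j\<in>?H. exp (-2*(1 - \<eta> j)))"
        using F by (simp add: exp_sum[symmetric] sum_distrib_left)
      also have "\<dots> \<le> (\<Prod>j\<in>?H. \<eta> j)"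
      proof (rule prod_mono)
        fix j assume "j \<in> ?H" hence "N \<le> j" by auto
        thus "0 \<le> exp (-2*(1 - \<eta> j)) \<and> exp (-2*(1 - \<eta> j)) \<le> \<eta> j"
          using exp_bound[of "\<eta> j"] N[of j] le1[of j] by auto
      qed
      finally show ?thesis .
    qed
    show "C \<le> (\<Prod>j\<in>F. \<eta> j)" unfolding C_def split
      using L1 H1 pos by (intro mult_mono) (auto simp: prod_nonneg less_imp_le)
  qed
  with Cpos show ?thesis by blast
qed

theorem theorem2:
  fixes E :: "nat \<Rightarrow> ('n::finite \<times> 'n) set"
    and \<eta> \<alpha> :: "nat \<Rightarrow> real"
    and k0 :: nat
    and x0 :: "'n \<Rightarrow> real"
  assumes "CARD('n) \<ge> 3"
    and "in_A_ave \<eta> \<alpha>"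
    and "summable (\<lambda>k. 1 - \<eta> k)"
    and "\<exists>i j. x0 i \<noteq> x0 j"
  shows "\<not> asymptotic_consensus (state E \<eta> \<alpha> k0 x0)
         \<and> liminf (\<lambda>K. ereal (spread (state E \<eta> \<alpha> k0 x0 K))) > 0"
proof -
  note A = assms(2)
  have pos: "\<And>j. 0 < \<eta> j" and le1: "\<And>j. \<eta> j \<le> 1" using A unfolding in_A_ave_def by auto
  obtain C where C: "C > 0" "\<And>F. finite F \<Longrightarrow> C \<le> (\<Prod>j\<in>F. \<eta> j)"
    using prod_lower[OF A assms(3)] by blast
  have C1: "C \<le> 1" using C(2)[of "{}"] by simp
  obtain i j where ij: "x0 i \<noteq> x0 j" using assms(4) by blast
  have d0: "spread x0 > 0"
    using spread_ge[of x0 i j] spread_ge[of x0 j i] ij by linarith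
  define \<delta> where "\<delta> = spread x0 * C"
  have dpos: "\<delta> > 0" unfolding \<delta>_def using d0 C by simp
  have bound: "\<delta> \<le> spread (state E \<eta> \<alpha> k0 x0 K)" for K
  proof -
    have "(\<Prod>k<K - k0. \<eta> (k0 + k)) = (\<Prod>j\<in>(\<lambda>k. k0 + k) ` {..<K-k0}. \<eta> j)"
      by (subst prod.reindex) (auto simp: inj_on_def)
    hence "C \<le> (\<Prod>k<K - k0. \<eta> (k0 + k))" using C(2) by simp
    hence "\<delta> \<le> spread x0 * (\<Prod>k<K - k0. \<eta> (k0 + k))"
      unfolding \<delta>_def using d0 by simp
    also have "\<dots> \<le> spread (state E \<eta> \<alpha> k0 x0 K)"
      unfolding state_def by (rule traj_spread[OF A])
    finally show ?thesis .
  qed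
  have lim: "liminf (\<lambda>K. ereal (spread (state E \<eta> \<alpha> k0 x0 K))) > 0"
  proof -
    have "ereal \<delta> \<le> liminf (\<lambda>K. ereal (spread (state E \<eta> \<alpha> k0 x0 K)))"
      by (intro Liminf_bounded) (use bound in auto)
    moreover have "0 < ereal \<delta>" using dpos by simp
    ultimately show ?thesis by (meson less_le_trans)
  qed
  have nc: "\<not> asymptotic_consensus (state E \<eta> \<alpha> k0 x0)"
  proof
    assume "asymptotic_consensus (state E \<eta> \<alpha> k0 x0)"
    then obtain z where z: "\<And>i. (\<lambda>k. state E \<eta> \<alpha> k0 x0 k i) \<longlonglongrightarrow> z"
      unfolding asymptotic_consensus_def by blast
    have "\<forall>i. eventually (\<lambda>k. dist (state E \<eta> \<alpha> k0 x0 k i) z < \<delta>/2) sequentially"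
      by (intro allI tendstoD[OF z]) (simp add: dpos)
    hence "eventually (\<lambda>k. \<forall>i. dist (state E \<eta> \<alpha> k0 x0 k i) z < \<delta>/2) sequentially"
      by (intro eventually_all_finite) blast
    then obtain k where k: "\<And>i. dist (state E \<eta> \<alpha> k0 x0 k i) z < \<delta>/2"
      unfolding eventually_sequentially by blast
    let ?x = "state E \<eta> \<alpha> k0 x0 k"
    have "Max (range ?x) \<in> range ?x" by (rule Max_in) simp_all
    then obtain t where t: "?x t = Max (range ?x)" by (auto simp: image_iff)
    have "Min (range ?x) \<in> range ?x" by (rule Min_in) simp_all
    then obtain b where b: "?x b = Min (range ?x)" by (auto simp: image_iff)
    have "spread ?x = ?x t - ?x b" using t b by (simp add: spread_def)
    moreover have "?x t - ?x b < \<delta>" using k[of t] k[of b] unfolding dist_real_def abs_less_iff by linarith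
    ultimately show False using bound[of k] by linarith
  qed
  show ?thesis using nc lim by blast
qed

end
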